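(* Let $X$ be a $k$-dimensional complex with vertex set $[n]$ and complete $(k-1)$-skeleton, and let $b\in B^{k-1}(X)$. For $F\in X_{k-2}$ define $h_b(F):=\sum_{v\notin F}[F\cup\{v\}:F]\,b(F\cup\{v\})$. Fix $d>0$ and let $E=D_{k-1}(X)-dI$. Then: (a) $b(H)=\frac1n\sum_{F\in X_{k-2},\,F\subset H}[H:F]\,h_b(F)$ for every $H\in X_{k-1}$; (b) $\langle Eb,Eb\rangle\le\frac{k}{n^2}\sum_{F\in X_{k-2}}h_b(F)^2\langle E\delta_{k-2}e_F,E\delta_{k-2}e_F\rangle$; (c) $\sum_{F\in X_{k-2}}h_b(F)^2\le k(n-k+1)\langle b,b\rangle$.
   Context: Standard Euclidean inner product. Complexes have linearly ordered vertex sets; $X_i$ is the set of $i$-faces; $[F:G]$ is the oriented incidence number ($(-1)^j$ if $F\setminus G=\{v_j\}$, $F=\{v_0<\dots<v_i\}$; $0$ if $G\not\subseteq F$). Complete $(k-1)$-skeleton: every vertex set of size at most $k$ is a face. $(\delta_{k-2}f)(H)=\sum_{G}[H:G]f(G)$, $B^{k-1}(X)=\operatorname{im}\delta_{k-2}$, $e_F$ the indicator cochain of $F$. $D_{k-1}(X)$ is the diagonal matrix with entry $\deg(F)$ (number of $k$-faces containing $F$) at $F\in X_{k-1}$. *)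

theory Defs
  imports Complex_Main
begin

text \<open>Complexes on vertex set [n] = {0..<n} (natural order); faces are finite sets of
 vertices; an i-face has i+1 vertices, so X_i = faces X (i+1).\<close>

definition faces :: "nat set set \<Rightarrow> nat \<Rightarrow> nat set set" where
  "faces X m = {F \<in> X. card F = m}"

definition simplicial_complex :: "nat \<Rightarrow> nat set set \<Rightarrow> bool" where
  "simplicial_complex n X \<longleftrightarrow> X \<subseteq> Pow {0..<n} \<and> {} \<in> X \<and>
     (\<forall>F \<in> X. \<forall>G. G \<subseteq> F \<longrightarrow> G \<in> X)"

definition dim_complex :: "nat \<Rightarrow> nat set set \<Rightarrow> nat \<Rightarrow> bool" where
  "dim_complex n X k \<longleftrightarrow> simplicial_complex n X \<and>
     (\<forall>F \<in> X. card F \<le> k + 1) \<and> (\<exists>F \<in> X. card F = k + 1)"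

definition complete_skeleton :: "nat \<Rightarrow> nat set set \<Rightarrow> nat \<Rightarrow> bool" where
  "complete_skeleton n X k \<longleftrightarrow> (\<forall>S. S \<subseteq> {0..<n} \<and> card S \<le> k \<longrightarrow> S \<in> X)"

text \<open>Oriented incidence number [F:G]: (-1)^j if F - G = {v_j}, j the position of v
 in the increasing enumeration of F (starting at 0), and 0 otherwise.\<close>
definition incid :: "nat set \<Rightarrow> nat set \<Rightarrow> real" where
  "incid F G = (if G \<subseteq> F \<and> card (F - G) = 1
      then (-1) ^ card {u \<in> F. u < the_elem (F - G)} else 0)"

text \<open>Coboundary from (m-1)-cochains (on faces X m) to m-cochains (on faces X (m+1)).\<close>
definition coboundary :: "nat set set \<Rightarrow> nat \<Rightarrow> (nat set \<Rightarrow> real) \<Rightarrow> nat set \<Rightarrow> real" where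
  "coboundary X m f H = (\<Sum>G \<in> faces X m. incid H G * f G)"

definition inner_cochain :: "nat set set \<Rightarrow> nat \<Rightarrow> (nat set \<Rightarrow> real) \<Rightarrow> (nat set \<Rightarrow> real) \<Rightarrow> real" where
  "inner_cochain X m u v = (\<Sum>H \<in> faces X m. u H * v H)"

definition deg :: "nat set set \<Rightarrow> nat set \<Rightarrow> nat" where
  "deg X F = card {S \<in> X. card S = card F + 1 \<and> F \<subseteq> S}"

definition indic :: "nat set \<Rightarrow> nat set \<Rightarrow> real" where
  "indic F G = (if G = F then 1 else 0)"

text \<open>B^{k-1}(X): image of delta_{k-2}, cochains on X_{k-1} = faces X k.\<close>
definition coboundaries :: "nat set set \<Rightarrow> nat \<Rightarrow> (nat set \<Rightarrow> real) set" where
  "coboundaries X k = {b. \<exists>f. \<forall>H \<in> faces X k. b H = coboundary X (k - 1) f H}"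

definition hb :: "nat \<Rightarrow> (nat set \<Rightarrow> real) \<Rightarrow> nat set \<Rightarrow> real" where
  "hb n b F = (\<Sum>v \<in> {0..<n} - F. incid (insert v F) F * b (insert v F))"

definition Eop :: "nat set set \<Rightarrow> real \<Rightarrow> (nat set \<Rightarrow> real) \<Rightarrow> nat set \<Rightarrow> real" where
  "Eop X d g H = (real (deg X H) - d) * g H"

end

theory Submission imports Defs begin

lemma cs_sum:
  fixes x :: "'a \<Rightarrow> real"
  shows "(\<Sum>i\<in>A. x i)^2 \<le> real (card A) * (\<Sum>i\<in>A. (x i)^2)"
proof -
  have "0 \<le> (\<Sum>i\<in>A. \<Sum>j\<in>A. (x i - x j)^2)" by (intro sum_nonneg) auto
  also have "(\<Sum>i\<in>A. \<Sum>j\<in>A. (x i - x j)^2) = (\<Sum>i\<in>A. \<Sum>j\<in>A. (x i)^2 + (x j)^2 - 2 * (x i * x j))"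
    by (simp add: power2_eq_square algebra_simps)
  also have "\<dots> = 2 * real (card A) * (\<Sum>i\<in>A. (x i)^2) - 2 * (\<Sum>i\<in>A. x i)^2"
  proof -
    have a: "(\<Sum>i\<in>A. \<Sum>j\<in>A. (x i)^2) = real (card A) * (\<Sum>i\<in>A. (x i)^2)"
      by (simp add: sum_distrib_left mult.commute)
    have b: "(\<Sum>i\<in>A. \<Sum>j\<in>A. (x j)^2) = real (card A) * (\<Sum>i\<in>A. (x i)^2)"
      by (simp add: sum_distrib_left)
    have c: "(\<Sum>i\<in>A. \<Sum>j\<in>A. 2 * (x i * x j)) = 2 * (\<Sum>i\<in>A. x i)^2"
    proof -
      have "(\<Sum>i\<in>A. \<Sum>j\<in>A. 2 * (x i * x j)) = (\<Sum>i\<in>A. 2 * x i * (\<Sum>j\<in>A. x j))"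
        by (simp add: sum_distrib_left mult.assoc)
      also have "\<dots> = 2 * (\<Sum>i\<in>A. x i) * (\<Sum>j\<in>A. x j)"
        by (simp only: sum_distrib_right[symmetric] sum_distrib_left[symmetric])
      finally show ?thesis by (simp add: power2_eq_square)
    qed
    show ?thesis by (simp only: sum.distrib sum_subtractf a b c)
  qed
  finally show ?thesis by simp
qed

definition sg :: "nat set \<Rightarrow> nat \<Rightarrow> real" where
  "sg A v = (-1) ^ card {x \<in> A. x < v}"

lemma sg_cases: "sg A v = 1 \<or> sg A v = -1"
  unfolding sg_def by (cases "even (card {x \<in> A. x < v})") auto

lemma sg_sq: "sg A v * sg A v = 1"
  using sg_cases[of A v] by auto

lemma sg_remove_self: "sg (A - {u}) u = sg A u"
proof -
  have "{x \<in> A - {u}. x < u} = {x \<in> A. x < u}" by auto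
  then show ?thesis by (simp add: sg_def)
qed

lemma sg_insert_self: "sg (insert v A) v = sg A v"
proof -
  have "{x \<in> insert v A. x < v} = {x \<in> A. x < v}" by auto
  then show ?thesis by (simp add: sg_def)
qed

lemma incid_remove: "u \<in> H \<Longrightarrow> incid H (H - {u}) = sg H u"
proof -
  assume u: "u \<in> H"
  then have "H - (H - {u}) = {u}" by auto
  then show ?thesis by (simp add: incid_def sg_def)
qed

lemma incid_insert: "v \<notin> A \<Longrightarrow> incid (insert v A) A = sg A v"
proof -
  assume v: "v \<notin> A"
  then have "insert v A - {v} = A" by auto
  then have "incid (insert v A) A = sg (insert v A) v"
    using incid_remove[of v "insert v A"] by simp
  then show ?thesis by (simp add: sg_insert_self)
qed

lemma incid_nz: "incid H G \<noteq> 0 \<Longrightarrow> \<exists>u\<in>H. G = H - {u}"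
proof -
  assume "incid H G \<noteq> 0"
  then have "G \<subseteq> H" "card (H - G) = 1" by (auto simp: incid_def split: if_splits)
  then obtain x where "H - G = {x}" by (auto simp: card_1_singleton_iff)
  with \<open>G \<subseteq> H\<close> show ?thesis by blast
qed

lemma sign_swap_lt:
  assumes "w1 \<in> K" "w2 \<in> K" "w1 < w2"
  shows "sg K w1 * sg (K - {w1}) w2 = - (sg K w2 * sg (K - {w2}) w1)"
proof -
  have fin: "finite {x \<in> K - {w1}. x < w2}" by (rule finite_subset[of _ "{..<w2}"]) auto
  have e1: "{x \<in> K. x < w2} = insert w1 {x \<in> K - {w1}. x < w2}" using assms by auto
  have c1: "card {x \<in> K. x < w2} = Suc (card {x \<in> K - {w1}. x < w2})"
    unfolding e1 using fin by simp
  have e2: "{x \<in> K - {w2}. x < w1} = {x \<in> K. x < w1}" using assms by auto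
  show ?thesis unfolding sg_def c1 e2 by simp
qed

lemma sign_swap:
  assumes "w1 \<in> K" "w2 \<in> K" "w1 \<noteq> w2"
  shows "sg K w1 * sg (K - {w1}) w2 = - (sg K w2 * sg (K - {w2}) w1)"
proof (cases "w1 < w2")
  case True then show ?thesis using sign_swap_lt assms by blast
next
  case False
  then have "w2 < w1" using assms by simp
  then show ?thesis using sign_swap_lt[of w2 K w1] assms by simp
qed

lemma reindex_face:
  assumes "finite S" "(\<lambda>u. H - {u}) ` H \<subseteq> S"
  shows "(\<Sum>G\<in>S. incid H G * g G) = (\<Sum>u\<in>H. sg H u * g (H - {u}))"
proof -
  have "(\<Sum>G\<in>S. incid H G * g G) = (\<Sum>G\<in>(\<lambda>u. H - {u}) ` H. incid H G * g G)"
  proof (rule sum.mono_neutral_right[OF assms])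
    show "\<forall>G\<in>S - (\<lambda>u. H - {u}) ` H. incid H G * g G = 0"
      using incid_nz by fastforce
  qed
  also have "\<dots> = (\<Sum>u\<in>H. incid H (H - {u}) * g (H - {u}))"
  proof (rule sum.reindex[unfolded comp_def])
    show "inj_on (\<lambda>u. H - {u}) H" by (auto simp: inj_on_def)
  qed
  also have "\<dots> = (\<Sum>u\<in>H. sg H u * g (H - {u}))"
    by (rule sum.cong) (auto simp: incid_remove)
  finally show ?thesis .
qed

lemma cocycle:
  assumes "finite K"
    and hb: "\<And>w. w \<in> K \<Longrightarrow> b (K - {w}) = (\<Sum>u\<in>K - {w}. sg (K - {w}) u * f (K - {w} - {u}))"
  shows "(\<Sum>w\<in>K. sg K w * b (K - {w})) = 0"
proof -
  define t where "t = (\<lambda>w u. sg K w * sg (K - {w}) u * f (K - {w} - {u}))"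
  define P where "P = (SIGMA w:K. K - {w})"
  have finP: "finite P" unfolding P_def using assms(1) by auto
  have "(\<Sum>w\<in>K. sg K w * b (K - {w})) = (\<Sum>w\<in>K. \<Sum>u\<in>K - {w}. t w u)"
    by (rule sum.cong) (auto simp: hb t_def sum_distrib_left mult.assoc)
  also have "\<dots> = (\<Sum>p\<in>P. case_prod t p)"
    unfolding P_def using assms(1) by (subst sum.Sigma) auto
  finally have S1: "(\<Sum>w\<in>K. sg K w * b (K - {w})) = (\<Sum>p\<in>P. case_prod t p)" .
  have bij: "bij_betw (\<lambda>(a, b). (b, a)) P P"
    by (rule bij_betw_byWitness[where f'="\<lambda>(a, b). (b, a)"]) (auto simp: P_def)
  have "(\<Sum>p\<in>P. case_prod t p) = (\<Sum>p\<in>P. case_prod t ((\<lambda>(a, b). (b, a)) p))"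
    using sum.reindex_bij_betw[OF bij, of "case_prod t"] by simp
  also have "\<dots> = (\<Sum>p\<in>P. - case_prod t p)"
  proof (rule sum.cong)
    fix p assume "p \<in> P"
    then obtain w u where p: "p = (w, u)" "w \<in> K" "u \<in> K" "w \<noteq> u" unfolding P_def by auto
    have "K - {u} - {w} = K - {w} - {u}" by auto
    then show "case_prod t ((\<lambda>(a, b). (b, a)) p) = - case_prod t p"
      using sign_swap[OF p(2,3,4)] p(1) unfolding t_def by simp
  qed simp
  also have "\<dots> = - (\<Sum>p\<in>P. case_prod t p)" by (simp add: sum_negf)
  finally have "(\<Sum>p\<in>P. case_prod t p) = 0" by simp
  with S1 show ?thesis by simp
qed


lemma double_count:
  fixes g :: "nat set \<Rightarrow> real"
  assumes "1 \<le> k" "finite V"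
  shows "(\<Sum>F\<in>{S. S \<subseteq> V \<and> card S = k - 1}. \<Sum>v\<in>V - F. g (insert v F))
       = real k * (\<Sum>H\<in>{S. S \<subseteq> V \<and> card S = k}. g H)"
proof -
  define A where "A = {S. S \<subseteq> V \<and> card S = k - 1}"
  define B where "B = {S. S \<subseteq> V \<and> card S = k}"
  have finA: "finite A" unfolding A_def by (rule finite_subset[of _ "Pow V"]) (use assms(2) in auto)
  have finB: "finite B" unfolding B_def by (rule finite_subset[of _ "Pow V"]) (use assms(2) in auto)
  have "(\<Sum>F\<in>A. \<Sum>v\<in>V - F. g (insert v F)) = (\<Sum>p\<in>(SIGMA F:A. V - F). g (insert (snd p) (fst p)))"
    using finA assms(2) by (subst sum.Sigma) (auto simp: case_prod_beta)
  also have "\<dots> = (\<Sum>p\<in>(SIGMA H:B. H). g (fst p))"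
  proof -
    have bij: "bij_betw (\<lambda>p. (insert (snd p) (fst p), snd p)) (SIGMA F:A. V - F) (SIGMA H:B. H)"
    proof (rule bij_betw_byWitness[where f'="\<lambda>p. (fst p - {snd p}, snd p)"])
      show "\<forall>a\<in>SIGMA F:A. V - F. (fst (insert (snd a) (fst a), snd a) - {snd (insert (snd a) (fst a), snd a)}, snd (insert (snd a) (fst a), snd a)) = a"
        by auto
      show "\<forall>a'\<in>SIGMA H:B. H. (insert (snd (fst a' - {snd a'}, snd a')) (fst (fst a' - {snd a'}, snd a')), snd (fst a' - {snd a'}, snd a')) = a'"
        by auto
      show "(\<lambda>p. (insert (snd p) (fst p), snd p)) ` (SIGMA F:A. V - F) \<subseteq> (SIGMA H:B. H)"
      proof (rule image_subsetI)
        fix p assume "p \<in> (SIGMA F:A. V - F)"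
        then obtain F v where p: "p = (F, v)" "F \<in> A" "v \<in> V" "v \<notin> F" by auto
        then have "F \<subseteq> V" "card F = k - 1" unfolding A_def by auto
        moreover then have "finite F" using assms(2) finite_subset by blast
        ultimately have "insert v F \<in> B" unfolding B_def using \<open>v \<in> V\<close> \<open>v \<notin> F\<close> assms(1) by auto
        then show "(insert (snd p) (fst p), snd p) \<in> (SIGMA H:B. H)" using p by auto
      qed
      show "(\<lambda>p. (fst p - {snd p}, snd p)) ` (SIGMA H:B. H) \<subseteq> (SIGMA F:A. V - F)"
      proof (rule image_subsetI)
        fix p assume "p \<in> (SIGMA H:B. H)"
        then obtain H v where p: "p = (H, v)" "H \<in> B" "v \<in> H" by auto
        then have "H \<subseteq> V" "card H = k" unfolding B_def by auto
        moreover then have "finite H" using assms(2) finite_subset by blast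
        ultimately have "H - {v} \<in> A" unfolding A_def using \<open>v \<in> H\<close> by auto
        then show "(fst p - {snd p}, snd p) \<in> (SIGMA F:A. V - F)" using p \<open>H \<subseteq> V\<close> by auto
      qed
    qed
    from sum.reindex_bij_betw[OF bij, of "\<lambda>p. g (fst p)"] show ?thesis by simp
  qed
  also have "\<dots> = (\<Sum>H\<in>B. \<Sum>v\<in>H. g H)"
    using finB by (subst sum.Sigma) (auto simp: B_def case_prod_beta intro: finite_subset[OF _ assms(2)])
  also have "\<dots> = (\<Sum>H\<in>B. real k * g H)"
    by (rule sum.cong) (auto simp: B_def)
  finally show ?thesis unfolding A_def B_def by (simp add: sum_distrib_left)
qed


theorem lemma3p8:
  fixes n k :: nat and X :: "nat set set" and b :: "nat set \<Rightarrow> real" and d :: real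
  assumes "1 \<le> k"
    and "dim_complex n X k"
    and "complete_skeleton n X k"
    and "b \<in> coboundaries X k"
    and "d > 0"
  shows "(\<forall>H \<in> faces X k. b H = 1 / real n *
            ((\<Sum>F \<in> {F \<in> faces X (k - 1). F \<subset> H}. incid H F * hb n b F))) \<and>
        (inner_cochain X k (Eop X d b) (Eop X d b) \<le> real k / (real n)^2 *
            (\<Sum>F \<in> faces X (k - 1). (hb n b F)^2 *
               inner_cochain X k (Eop X d (coboundary X (k - 1) (indic F)))
                                 (Eop X d (coboundary X (k - 1) (indic F))))) \<and>
        ((\<Sum>F \<in> faces X (k - 1). (hb n b F)^2) \<le> real k * real (n - k + 1) * inner_cochain X k b b)"
proof -
  define V where "V = {0..<n}"
  have finV: "finite V" unfolding V_def by simp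
  have sc: "X \<subseteq> Pow V" using assms(2) unfolding dim_complex_def simplicial_complex_def V_def by auto
  have faces_eq: "faces X m = {S. S \<subseteq> V \<and> card S = m}" if "m \<le> k" for m
    using sc assms(3) that unfolding faces_def complete_skeleton_def V_def by auto
  have Fk: "faces X k = {S. S \<subseteq> V \<and> card S = k}" by (rule faces_eq) simp
  have Fk1: "faces X (k - 1) = {S. S \<subseteq> V \<and> card S = k - 1}" by (rule faces_eq) simp
  have finFk1: "finite (faces X (k - 1))" unfolding Fk1
    by (rule finite_subset[of _ "Pow V"]) (use finV in auto)
  have finFk: "finite (faces X k)" unfolding Fk
    by (rule finite_subset[of _ "Pow V"]) (use finV in auto)
  have kn: "k < n"
  proof -
    obtain F where "F \<in> X" "card F = k + 1" using assms(2) unfolding dim_complex_def by auto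
    then have "F \<subseteq> V" using sc by auto
    then have "card F \<le> card V" using finV by (rule card_mono[rotated])
    with \<open>card F = k + 1\<close> show ?thesis unfolding V_def by simp
  qed
  have npos: "real n > 0" using kn by simp
  obtain f where f: "\<forall>H \<in> faces X k. b H = coboundary X (k - 1) f H"
    using assms(4) unfolding coboundaries_def by auto
  have img: "(\<lambda>u. H - {u}) ` H \<subseteq> faces X (k - 1)" if "H \<subseteq> V" "card H = k" for H
  proof -
    have "finite H" using that finV finite_subset by blast
    then show ?thesis unfolding Fk1 using that by auto
  qed
  have bH: "b H = (\<Sum>u\<in>H. sg H u * f (H - {u}))" if "H \<subseteq> V" "card H = k" for H
  proof -
    have "b H = (\<Sum>G\<in>faces X (k - 1). incid H G * f G)"
      using f that unfolding Fk coboundary_def by auto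
    also have "\<dots> = (\<Sum>u\<in>H. sg H u * f (H - {u}))"
      by (rule reindex_face[OF finFk1 img[OF that]])
    finally show ?thesis .
  qed
  have hbF: "hb n b F = (\<Sum>v\<in>V - F. sg F v * b (insert v F))" for F
    unfolding hb_def V_def[symmetric] by (rule sum.cong) (auto simp: incid_insert)
  have keyH: "(\<Sum>u\<in>H. sg H u * hb n b (H - {u})) = real n * b H" if H: "H \<subseteq> V" "card H = k" for H
  proof -
    have finH: "finite H" using H finV finite_subset by blast
    have inner: "(\<Sum>u\<in>H. sg H u * sg (H - {u}) v * b (insert v (H - {u}))) = b H" if v: "v \<in> V - H" for v
    proof -
      define K where "K = insert v H"
      have finK: "finite K" unfolding K_def using finH by simp
      have cardK: "card K = k + 1" unfolding K_def using finH v H by simp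
      have coc: "(\<Sum>w\<in>K. sg K w * b (K - {w})) = 0"
      proof (rule cocycle[OF finK])
        fix w assume "w \<in> K"
        then have "K - {w} \<subseteq> V" "card (K - {w}) = k" using cardK finK v H unfolding K_def by auto
        then show "b (K - {w}) = (\<Sum>u\<in>K - {w}. sg (K - {w}) u * f (K - {w} - {u}))" by (rule bH)
      qed
      have KH: "K - {v} = H" unfolding K_def using v by auto
      have "(\<Sum>w\<in>K. sg K w * b (K - {w})) = sg K v * b H + (\<Sum>u\<in>H. sg K u * b (K - {u}))"
        unfolding K_def using finH v by (simp add: KH[unfolded K_def])
      with coc have S: "(\<Sum>u\<in>H. sg K u * b (K - {u})) = - sg K v * b H" by simp
      have "(\<Sum>u\<in>H. sg H u * sg (H - {u}) v * b (insert v (H - {u})))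
          = (\<Sum>u\<in>H. - sg K v * (sg K u * b (K - {u})))"
      proof (rule sum.cong)
        fix u assume u: "u \<in> H"
        have uv: "u \<noteq> v" using u v by auto
        have e1: "K - {u} = insert v (H - {u})" unfolding K_def using uv by auto
        have sw: "sg K u * sg (K - {u}) v = - (sg K v * sg (K - {v}) u)"
          by (rule sign_swap) (use u uv in \<open>auto simp: K_def\<close>)
        have sw2: "sg K u * sg (H - {u}) v = - (sg K v * sg H u)"
          using sw unfolding e1 sg_insert_self KH .
        have "sg H u * sg (H - {u}) v = - sg K v * sg K u"
          using sw2 sg_cases[of K u] sg_cases[of K v] sg_cases[of H u] sg_cases[of "H - {u}" v]
          by auto
        then show "sg H u * sg (H - {u}) v * b (insert v (H - {u})) = - sg K v * (sg K u * b (K - {u}))"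
          unfolding e1 by simp
      qed simp
      also have "\<dots> = - sg K v * (- sg K v * b H)" by (subst sum_distrib_left[symmetric]) (simp only: S)
      also have "\<dots> = b H" using sg_sq[of K v] by (simp add: algebra_simps)
      finally show ?thesis .
    qed
    have "(\<Sum>u\<in>H. sg H u * hb n b (H - {u}))
       = (\<Sum>u\<in>H. b H + (\<Sum>v\<in>V - H. sg H u * sg (H - {u}) v * b (insert v (H - {u}))))"
    proof (rule sum.cong)
      fix u assume u: "u \<in> H"
      have e: "V - (H - {u}) = insert u (V - H)" using u H by auto
      have ins: "insert u (H - {u}) = H" using u by auto
      have "hb n b (H - {u}) = sg (H - {u}) u * b H + (\<Sum>v\<in>V - H. sg (H - {u}) v * b (insert v (H - {u})))"
        unfolding hbF e using finV u by (simp add: ins insert_absorb)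
      then show "sg H u * hb n b (H - {u}) = b H + (\<Sum>v\<in>V - H. sg H u * sg (H - {u}) v * b (insert v (H - {u})))"
        using sg_sq[of H u] by (simp add: sg_remove_self algebra_simps sum_distrib_left)
    qed simp
    also have "\<dots> = real k * b H + (\<Sum>v\<in>V - H. \<Sum>u\<in>H. sg H u * sg (H - {u}) v * b (insert v (H - {u})))"
      using H by (simp add: sum.distrib sum.swap[of _ H "V - H"])
    also have "\<dots> = real k * b H + (\<Sum>v\<in>V - H. b H)"
      using inner by simp
    also have "\<dots> = real k * b H + real (n - k) * b H"
      using H finV finH by (simp add: card_Diff_subset V_def)
    also have "\<dots> = real n * b H" using kn by (simp add: algebra_simps of_nat_diff)
    finally show ?thesis .
  qed
  have filt: "(\<Sum>F \<in> {F \<in> faces X (k - 1). F \<subset> H}. incid H F * g F) = (\<Sum>u\<in>H. sg H u * g (H - {u}))"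
    if H: "H \<subseteq> V" "card H = k" for H g
  proof (rule reindex_face)
    show "finite {F \<in> faces X (k - 1). F \<subset> H}" using finFk1 by simp
    have "H \<noteq> {}" using H assms(1) by auto
    show "(\<lambda>u. H - {u}) ` H \<subseteq> {F \<in> faces X (k - 1). F \<subset> H}" using img[OF H] by auto
  qed
  have partA: "b H = 1 / real n * ((\<Sum>F \<in> {F \<in> faces X (k - 1). F \<subset> H}. incid H F * hb n b F))"
    if H: "H \<subseteq> V" "card H = k" for H
    using keyH[OF H] filt[OF H] npos by simp
  have partC: "(\<Sum>F \<in> faces X (k - 1). (hb n b F)^2) \<le> real k * real (n - k + 1) * inner_cochain X k b b"
  proof -
    have "(\<Sum>F \<in> faces X (k - 1). (hb n b F)^2) \<le> (\<Sum>F \<in> faces X (k - 1). real (n - k + 1) * (\<Sum>v\<in>V - F. (b (insert v F))^2))"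
    proof (rule sum_mono)
      fix F assume F: "F \<in> faces X (k - 1)"
      then have FV: "F \<subseteq> V" "card F = k - 1" unfolding Fk1 by auto
      have finF: "finite F" using FV finV finite_subset by blast
      have cd: "card (V - F) = n - k + 1" using FV finF kn assms(1) by (simp add: card_Diff_subset V_def)
      have "(hb n b F)^2 \<le> real (card (V - F)) * (\<Sum>v\<in>V - F. (sg F v * b (insert v F))^2)"
        unfolding hbF by (rule cs_sum)
      also have "\<dots> = real (n - k + 1) * (\<Sum>v\<in>V - F. (b (insert v F))^2)"
        unfolding cd by (simp add: power_mult_distrib power2_eq_square[of "sg F _"] sg_sq)
      finally show "(hb n b F)^2 \<le> real (n - k + 1) * (\<Sum>v\<in>V - F. (b (insert v F))^2)" .
    qed
    also have "\<dots> = real (n - k + 1) * (\<Sum>F \<in> faces X (k - 1). \<Sum>v\<in>V - F. (b (insert v F))^2)"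
      by (simp add: sum_distrib_left)
    also have "\<dots> = real (n - k + 1) * (real k * (\<Sum>H\<in>faces X k. (b H)^2))"
      unfolding Fk1 Fk using double_count[OF assms(1) finV, of "\<lambda>H. (b H)^2"] by simp
    also have "\<dots> = real k * real (n - k + 1) * inner_cochain X k b b"
      unfolding inner_cochain_def by (simp add: power2_eq_square)
    finally show ?thesis .
  qed
  have cobF: "coboundary X (k - 1) (indic F) H = incid H F" if "F \<in> faces X (k - 1)" for F H
  proof -
    have "coboundary X (k - 1) (indic F) H = (\<Sum>G\<in>faces X (k - 1). if G = F then incid H F else 0)"
      unfolding coboundary_def by (rule sum.cong) (auto simp: indic_def)
    also have "\<dots> = incid H F" using finFk1 that by simp
    finally show ?thesis .
  qed
  define e where "e H = (real (deg X H) - d)^2" for H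
  have partB: "inner_cochain X k (Eop X d b) (Eop X d b) \<le> real k / (real n)^2 *
            (\<Sum>F \<in> faces X (k - 1). (hb n b F)^2 *
               inner_cochain X k (Eop X d (coboundary X (k - 1) (indic F)))
                                 (Eop X d (coboundary X (k - 1) (indic F))))"
  proof -
    have "inner_cochain X k (Eop X d b) (Eop X d b) = (\<Sum>H\<in>faces X k. e H * (b H)^2)"
      unfolding inner_cochain_def Eop_def e_def by (simp add: power2_eq_square algebra_simps)
    also have "\<dots> \<le> (\<Sum>H\<in>faces X k. real k / (real n)^2 * (e H * (\<Sum>u\<in>H. (hb n b (H - {u}))^2)))"
    proof (rule sum_mono)
      fix H assume "H \<in> faces X k"
      then have H: "H \<subseteq> V" "card H = k" unfolding Fk by auto
      have bh: "b H = 1 / real n * (\<Sum>u\<in>H. sg H u * hb n b (H - {u}))"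
        using keyH[OF H] npos by simp
      have "(\<Sum>u\<in>H. sg H u * hb n b (H - {u}))^2 \<le> real (card H) * (\<Sum>u\<in>H. (sg H u * hb n b (H - {u}))^2)"
        by (rule cs_sum)
      also have "\<dots> = real k * (\<Sum>u\<in>H. (hb n b (H - {u}))^2)"
        using H by (simp add: power_mult_distrib power2_eq_square[of "sg H _"] sg_sq)
      finally have c: "(\<Sum>u\<in>H. sg H u * hb n b (H - {u}))^2 \<le> real k * (\<Sum>u\<in>H. (hb n b (H - {u}))^2)" .
      have e0: "e H \<ge> 0" unfolding e_def by simp
      have "e H * (b H)^2 = e H / (real n)^2 * (\<Sum>u\<in>H. sg H u * hb n b (H - {u}))^2"
        unfolding bh by (simp add: power_mult_distrib power_divide)
      also have "\<dots> \<le> e H / (real n)^2 * (real k * (\<Sum>u\<in>H. (hb n b (H - {u}))^2))"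
        by (rule mult_left_mono[OF c]) (use e0 in simp)
      also have "\<dots> = real k / (real n)^2 * (e H * (\<Sum>u\<in>H. (hb n b (H - {u}))^2))"
        by simp
      finally show "e H * (b H)^2 \<le> real k / (real n)^2 * (e H * (\<Sum>u\<in>H. (hb n b (H - {u}))^2))" .
    qed
    also have "\<dots> = real k / (real n)^2 * (\<Sum>H\<in>faces X k. e H * (\<Sum>u\<in>H. (hb n b (H - {u}))^2))"
      by (simp add: sum_distrib_left)
    also have "(\<Sum>H\<in>faces X k. e H * (\<Sum>u\<in>H. (hb n b (H - {u}))^2))
        = (\<Sum>F \<in> faces X (k - 1). (hb n b F)^2 *
               inner_cochain X k (Eop X d (coboundary X (k - 1) (indic F)))
                                 (Eop X d (coboundary X (k - 1) (indic F))))"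
    proof -
      have "(\<Sum>F \<in> faces X (k - 1). (hb n b F)^2 *
               inner_cochain X k (Eop X d (coboundary X (k - 1) (indic F)))
                                 (Eop X d (coboundary X (k - 1) (indic F))))
          = (\<Sum>F \<in> faces X (k - 1). \<Sum>H\<in>faces X k. e H * (incid H F * (incid H F * (hb n b F)^2)))"
        unfolding inner_cochain_def Eop_def
      proof (rule sum.cong)
        fix F assume F: "F \<in> faces X (k - 1)"
        show "(hb n b F)^2 * (\<Sum>H\<in>faces X k. (real (deg X H) - d) * coboundary X (k - 1) (indic F) H *
                 ((real (deg X H) - d) * coboundary X (k - 1) (indic F) H))
            = (\<Sum>H\<in>faces X k. e H * (incid H F * (incid H F * (hb n b F)^2)))"
          unfolding cobF[OF F] sum_distrib_left
          by (rule sum.cong) (simp_all add: e_def power2_eq_square)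
      qed simp
      also have "\<dots> = (\<Sum>H\<in>faces X k. \<Sum>F \<in> faces X (k - 1). e H * (incid H F * (incid H F * (hb n b F)^2)))"
        by (rule sum.swap)
      also have "\<dots> = (\<Sum>H\<in>faces X k. e H * (\<Sum>u\<in>H. (hb n b (H - {u}))^2))"
      proof (rule sum.cong)
        fix H assume "H \<in> faces X k"
        then have H: "H \<subseteq> V" "card H = k" unfolding Fk by auto
        have "(\<Sum>F \<in> faces X (k - 1). incid H F * (incid H F * (hb n b F)^2))
            = (\<Sum>u\<in>H. sg H u * (incid H (H - {u}) * (hb n b (H - {u}))^2))"
          by (rule reindex_face[OF finFk1 img[OF H]])
        also have "\<dots> = (\<Sum>u\<in>H. (hb n b (H - {u}))^2)"
          by (rule sum.cong) (auto simp: incid_remove mult.assoc[symmetric] sg_sq)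
        finally show "(\<Sum>F \<in> faces X (k - 1). e H * (incid H F * (incid H F * (hb n b F)^2)))
            = e H * (\<Sum>u\<in>H. (hb n b (H - {u}))^2)"
          by (simp add: sum_distrib_left[symmetric])
      qed simp
      finally show ?thesis by simp
    qed
    finally show ?thesis .
  qed
  show ?thesis
  proof (intro conjI ballI)
    fix H assume "H \<in> faces X k"
    then show "b H = 1 / real n * ((\<Sum>F \<in> {F \<in> faces X (k - 1). F \<subset> H}. incid H F * hb n b F))"
      using partA unfolding Fk by auto
  qed (rule partB, rule partC)
qed

end
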